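(* Let $\mu_1>\mu_2\ge\dots\ge\mu_K$ and $\sigma_1,\dots,\sigma_K>0$, and let $w^*=\arg\max_{w\in\mathcal{W}}\min_{a\neq1}\frac{(\mu_1-\mu_a)^2}{2(\sigma_1^2/w_1+\sigma_a^2/w_a)}$. For $a\ge2$ define $\psi_a(y)=\frac{(\mu_1-\mu_a)^2-2y\sigma_1^2}{2\sigma_a^2y}$. Then \[ w_1^*=\frac{1}{1+\sum_{i\ge2}1/\psi_i(y^* )},\qquad w_a^*=\frac{1/\psi_a(y^* )}{1+\sum_{i\ge2}1/\psi_i(y^* )}\quad(a\ge2), \] where $y^*$ is the unique solution of $\sum_{a\ge2}\frac{\sigma_1^2}{\sigma_a^2\psi_a(y)^2}=1$. Moreover, $F(y)=\sum_{a\ge2}\frac{\sigma_1^2}{\sigma_a^2\psi_a(y)^2}$, defined on $(0,(\mu_1-\mu_2)^2/(2\sigma_1^2)]$, is strictly increasing with $\lim_{y\to0}F(y)=0$ and $\lim_{y\to(\mu_1-\mu_2)^2/(2\sigma_1^2)}F(y)=\infty$.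
   Context: $K\ge2$; $\mathcal{W}=\{w\in\mathbb{R}_+^K:\sum_{a=1}^Kw_a=1\}$ is the probability simplex. *)

theory Defs
  imports "HOL-Analysis.Analysis"
begin

text \<open>Arms are indexed by 1..K; weights, means and standard deviations are
functions nat => real whose values outside {1..K} are irrelevant.\<close>

definition prob_simplex :: "nat \<Rightarrow> (nat \<Rightarrow> real) set" where
  "prob_simplex K = {w. (\<forall>a\<in>{1..K}. 0 \<le> w a) \<and> (\<Sum>a=1..K. w a) = 1}"

text \<open>The term (mu_1-mu_a)^2 / (2 (sigma_1^2/w_1 + sigma_a^2/w_a)), with the
usual extended-real convention sigma^2/0 = infinity, i.e. the term is 0
whenever w_1 = 0 or w_a = 0.\<close>

definition gap_term :: "(nat \<Rightarrow> real) \<Rightarrow> (nat \<Rightarrow> real) \<Rightarrow> (nat \<Rightarrow> real) \<Rightarrow> nat \<Rightarrow> real" where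
  "gap_term \<mu> \<sigma> w a =
     (if 0 < w 1 \<and> 0 < w a
      then (\<mu> 1 - \<mu> a)\<^sup>2 / (2 * ((\<sigma> 1)\<^sup>2 / w 1 + (\<sigma> a)\<^sup>2 / w a))
      else 0)"

definition objective :: "nat \<Rightarrow> (nat \<Rightarrow> real) \<Rightarrow> (nat \<Rightarrow> real) \<Rightarrow> (nat \<Rightarrow> real) \<Rightarrow> real" where
  "objective K \<mu> \<sigma> w = Min ((gap_term \<mu> \<sigma> w) ` {2..K})"

definition is_optimal :: "nat \<Rightarrow> (nat \<Rightarrow> real) \<Rightarrow> (nat \<Rightarrow> real) \<Rightarrow> (nat \<Rightarrow> real) \<Rightarrow> bool" where
  "is_optimal K \<mu> \<sigma> w \<longleftrightarrow>
     w \<in> prob_simplex K \<and> (\<forall>v\<in>prob_simplex K. objective K \<mu> \<sigma> v \<le> objective K \<mu> \<sigma> w)"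

definition psi :: "(nat \<Rightarrow> real) \<Rightarrow> (nat \<Rightarrow> real) \<Rightarrow> nat \<Rightarrow> real \<Rightarrow> real" where
  "psi \<mu> \<sigma> a y = ((\<mu> 1 - \<mu> a)\<^sup>2 - 2 * y * (\<sigma> 1)\<^sup>2) / (2 * (\<sigma> a)\<^sup>2 * y)"

definition Fsum :: "nat \<Rightarrow> (nat \<Rightarrow> real) \<Rightarrow> (nat \<Rightarrow> real) \<Rightarrow> real \<Rightarrow> real" where
  "Fsum K \<mu> \<sigma> y = (\<Sum>a=2..K. (\<sigma> 1)\<^sup>2 / ((\<sigma> a)\<^sup>2 * (psi \<mu> \<sigma> a y)\<^sup>2))"

end

theory Submission imports Defs begin

lemma tangent_id0:
  fixes p q t x z E :: real
  assumes "p>0" "q>0" "t>0" "E > 0" "E = p*z+q*x"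
  shows "p*x/(q*t^2) + z - (p+q*t)^2*x*z/(q*t^2*E) = p*(x - t*z)^2/(t^2*E)"
proof -
  have "p*x/(q*t^2) + z - (p+q*t)^2*x*z/(q*t^2*E) = (p*x*E + z*q*t^2*E - (p+q*t)^2*x*z)/(q*t^2*E)"
    using assms(1-4) by (simp add: field_simps)
  also have "p*x*E + z*q*t^2*E - (p+q*t)^2*x*z = q*(p*(x - t*z)^2)"
    unfolding assms(5) by (simp add: algebra_simps power2_eq_square)
  also have "q*(p*(x - t*z)^2)/(q*t^2*E) = p*(x - t*z)^2/(t^2*E)"
    using assms by simp
  finally show ?thesis .
qed

lemma tangent_id:
  fixes p q t y x z D :: real
  assumes "p>0" "q>0" "t>0" "y>0" "D = 2*y*(p+q*t)" "x>0" "z>0"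
  shows "p*x/(q*t^2) + z - (D/(2*y^2*q*t^2)) * (D/(2*(p/x+q/z)))
         = p*(x - t*z)^2/(t^2*(p*z+q*x))"
proof -
  have h: "p*z+q*x > 0" using assms by (simp add: add_pos_pos)
  have "D/(2*(p/x+q/z)) = D*x*z/(2*(p*z+q*x))" using assms h by (simp add: field_simps)
  then have "(D/(2*y^2*q*t^2)) * (D/(2*(p/x+q/z))) = D^2*x*z/(4*y^2*(q*t^2*(p*z+q*x)))"
    using assms(1-4) h by (simp add: power2_eq_square algebra_simps)
  also have "D^2 = 4*y^2*((p+q*t)^2)" using assms(5) by (simp add: power2_eq_square)
  also have "4*y^2*((p+q*t)^2)*x*z/(4*y^2*(q*t^2*(p*z+q*x))) = (p+q*t)^2*x*z/(q*t^2*(p*z+q*x))"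
    using assms(4) by simp
  finally have "(D/(2*y^2*q*t^2)) * (D/(2*(p/x+q/z))) = (p+q*t)^2*x*z/(q*t^2*(p*z+q*x))" .
  then show ?thesis using tangent_id0[OF assms(1-3) h refl] by simp
qed

lemma term_eq0:
  fixes p q N y :: real
  assumes "q > 0"
  shows "p/(q*(N/(2*q*y))^2) = 4*p*q*y^2/N^2"
proof (cases "N = 0 \<or> y = 0")
  case True then show ?thesis by auto
next
  case False then show ?thesis using assms by (simp add: field_simps power2_eq_square)
qed

lemma term_eq:
  assumes "\<sigma> a > 0"
  shows "(\<sigma> 1)^2/((\<sigma> a)^2 * (psi \<mu> \<sigma> a y)^2)
    = 4*(\<sigma> 1)^2*(\<sigma> a)^2*y^2/((\<mu> 1 - \<mu> a)^2 - 2*y*(\<sigma> 1)^2)^2"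
  using term_eq0[of "(\<sigma> a)^2" "(\<sigma> 1)^2" "(\<mu> 1 - \<mu> a)^2 - 2*y*(\<sigma> 1)^2" y] assms
  unfolding psi_def by (simp add: mult.assoc)

lemma psi_D:
  assumes "\<sigma> a > 0" "y > 0"
  shows "(\<mu> 1 - \<mu> a)^2 = 2*y*((\<sigma> 1)^2 + (\<sigma> a)^2 * psi \<mu> \<sigma> a y)"
  using assms unfolding psi_def by (simp add: field_simps)

lemma psi_pos:
  assumes "\<sigma> a > 0" "y > 0" "2*y*(\<sigma> 1)^2 < (\<mu> 1 - \<mu> a)^2"
  shows "psi \<mu> \<sigma> a y > 0"
  using assms unfolding psi_def by (simp add: field_simps)


lemma tangent_le:
  fixes p q t y x z D :: real
  assumes "p>0" "q>0" "t>0" "y>0" "D = 2*y*(p+q*t)" "x\<ge>0" "z\<ge>0"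
  shows "(D/(2*y^2*q*t^2)) * (if 0<x \<and> 0<z then D/(2*(p/x+q/z)) else 0) \<le> p*x/(q*t^2) + z"
proof (cases "0<x \<and> 0<z")
  case True
  then have "p*x/(q*t^2) + z - (D/(2*y^2*q*t^2)) * (D/(2*(p/x+q/z))) \<ge> 0"
    using tangent_id[OF assms(1-5)] assms by (simp add: add_pos_pos)
  then show ?thesis using True by simp
next
  case False
  have "p*x/(q*t^2) + z \<ge> 0" using assms by simp
  moreover from False have "(if 0<x \<and> 0<z then D/(2*(p/x+q/z)) else 0) = 0" by (rule if_not_P)
  ultimately show ?thesis by simp
qed

lemma tangent_eq:
  fixes p q t y x z D :: real
  assumes "p>0" "q>0" "t>0" "y>0" "D = 2*y*(p+q*t)" "x>0" "z>0"
    and "(D/(2*y^2*q*t^2)) * (D/(2*(p/x+q/z))) = p*x/(q*t^2) + z"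
  shows "x = t*z"
proof -
  have "p*(x - t*z)^2/(t^2*(p*z+q*x)) = 0"
    using tangent_id[OF assms(1-7)] assms(8) by simp
  moreover have "t^2*(p*z+q*x) > 0" using assms by (simp add: add_pos_pos)
  ultimately have "p*(x - t*z)^2 = 0" by (metis divide_eq_0_iff less_irrefl)
  then have "(x - t*z)^2 = 0" using assms(1) by simp
  then show ?thesis by simp
qed

lemma value_eq:
  fixes p q t y S D :: real
  assumes "p>0" "q>0" "t>0" "y>0" "D = 2*y*(p+q*t)" "S>0"
  shows "D/(2*(p/(1/S)+q/((1/t)/S))) = y/S"
proof -
  have "D/(2*(p/(1/S)+q/((1/t)/S))) = D/(2*S*(p+q*t))" using assms by (simp add: algebra_simps)
  moreover have "p+q*t > 0" using assms by (intro add_pos_pos mult_pos_pos)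
  ultimately show ?thesis using assms by simp
qed

lemma sum_split1:
  fixes f :: "nat \<Rightarrow> real"
  assumes "1 \<le> K"
  shows "(\<Sum>a=1..K. f a) = f 1 + (\<Sum>a=2..K. f a)"
  using sum.atLeast_Suc_atMost[OF assms, of f] by (simp add: numeral_2_eq_2)

lemma opt_char:
  fixes K :: nat and \<mu> \<sigma> :: "nat \<Rightarrow> real" and y :: real
  assumes K2: "2 \<le> K"
    and sig: "\<forall>a\<in>{1..K}. \<sigma> a > 0"
    and ypos: "y > 0"
    and gap: "\<forall>a\<in>{2..K}. 2*y*(\<sigma> 1)^2 < (\<mu> 1 - \<mu> a)^2"
    and F1: "Fsum K \<mu> \<sigma> y = 1"
  defines "S \<equiv> 1 + (\<Sum>i=2..K. 1 / psi \<mu> \<sigma> i y)"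
  defines "w \<equiv> (\<lambda>a. if a = 1 then 1/S else (1 / psi \<mu> \<sigma> a y)/S)"
  shows "is_optimal K \<mu> \<sigma> w"
    and "\<And>v. is_optimal K \<mu> \<sigma> v \<Longrightarrow> v 1 = 1/S \<and> (\<forall>a\<in>{2..K}. v a = (1 / psi \<mu> \<sigma> a y)/S)"
proof -
  define p where "p = (\<sigma> 1)^2"
  define q where "q = (\<lambda>a. (\<sigma> a)^2)"
  define \<psi> where "\<psi> = (\<lambda>a. psi \<mu> \<sigma> a y)"
  define dd where "dd = (\<lambda>a. (\<mu> 1 - \<mu> a)^2)"
  define lam where "lam = (\<lambda>a. dd a/(2*y^2*q a*(\<psi> a)^2))"
  define L where "L = (\<lambda>v a. p* v 1/(q a*(\<psi> a)^2) + v a)"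
  have "1 \<in> {1..K}" using K2 by simp
  then have "\<sigma> 1 > 0" using sig by blast
  then have ppos: "p > 0" unfolding p_def by simp
  have sigp: "\<sigma> a > 0" if "a \<in> {2..K}" for a using sig that by auto
  have qpos: "q a > 0" if "a \<in> {2..K}" for a using sigp[OF that] unfolding q_def by auto
  have psipos: "\<psi> a > 0" if "a \<in> {2..K}" for a
    unfolding \<psi>_def using psi_pos[of \<sigma> a y \<mu>, OF sigp[OF that] ypos] gap that by auto
  have ddeq: "dd a = 2*y*(p + q a * \<psi> a)" if "a \<in> {2..K}" for a
    unfolding dd_def p_def q_def \<psi>_def using psi_D[of \<sigma> a y \<mu>, OF sigp[OF that] ypos] by simp
  have fin: "finite {2..K}" by simp
  have ne: "{2..K} \<noteq> {}" using K2 by simp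
  have Sge: "S \<ge> 1" unfolding S_def using psipos unfolding \<psi>_def
    by (intro add_increasing2 sum_nonneg) (auto simp: less_imp_le)
  then have Spos: "S > 0" by simp
  have Fq: "(\<Sum>a=2..K. p/(q a*(\<psi> a)^2)) = 1"
    using F1 unfolding Fsum_def p_def q_def \<psi>_def .
  have g: "gap_term \<mu> \<sigma> v a = (if 0 < v 1 \<and> 0 < v a then dd a/(2*(p/v 1 + q a/v a)) else 0)" for v a
    unfolding gap_term_def dd_def p_def q_def by simp
  have T: "lam a * gap_term \<mu> \<sigma> v a \<le> L v a"
    if v: "v \<in> prob_simplex K" and a: "a \<in> {2..K}" for v a
  proof -
    have "v 1 \<ge> 0" "v a \<ge> 0" using v a K2 unfolding prob_simplex_def by auto
    from tangent_le[OF ppos qpos[OF a] psipos[OF a] ypos ddeq[OF a] this]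
    show ?thesis unfolding lam_def L_def g .
  qed
  have sumL: "(\<Sum>a=2..K. L v a) = 1" if v: "v \<in> prob_simplex K" for v
  proof -
    have "(\<Sum>a=2..K. L v a) = v 1 * (\<Sum>a=2..K. p/(q a*(\<psi> a)^2)) + (\<Sum>a=2..K. v a)"
      unfolding L_def sum.distrib sum_distrib_left by (simp add: algebra_simps)
    also have "\<dots> = (\<Sum>a=1..K. v a)" using Fq sum_split1[of K v] K2 by simp
    also have "\<dots> = 1" using v unfolding prob_simplex_def by simp
    finally show ?thesis .
  qed
  have lamS: "(\<Sum>a=2..K. lam a) = S / y"
  proof -
    have "lam a = (p/(q a*(\<psi> a)^2) + 1/\<psi> a) / y" if a: "a \<in> {2..K}" for a
      using ddeq[OF a] qpos[OF a] psipos[OF a] ypos unfolding lam_def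
      by (simp add: field_simps power2_eq_square)
    then have "(\<Sum>a=2..K. lam a) = (\<Sum>a=2..K. (p/(q a*(\<psi> a)^2) + 1/\<psi> a) / y)"
      by (intro sum.cong) auto
    also have "\<dots> = ((\<Sum>a=2..K. p/(q a*(\<psi> a)^2)) + (\<Sum>a=2..K. 1/\<psi> a)) / y"
      by (simp only: sum_divide_distrib[symmetric] sum.distrib)
    also have "\<dots> = S / y" using Fq unfolding S_def \<psi>_def by simp
    finally show ?thesis .
  qed
  have lampos: "lam a > 0" if a: "a \<in> {2..K}" for a
    using ddeq[OF a] qpos[OF a] psipos[OF a] ypos ppos unfolding lam_def
    by (auto intro!: divide_pos_pos mult_pos_pos add_pos_pos)
  have ub: "objective K \<mu> \<sigma> v \<le> y / S" if v: "v \<in> prob_simplex K" for v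
  proof -
    define m where "m = objective K \<mu> \<sigma> v"
    have mle: "m \<le> gap_term \<mu> \<sigma> v a" if "a \<in> {2..K}" for a
      unfolding m_def objective_def using that fin by (intro Min_le) auto
    have "(\<Sum>a=2..K. lam a) * m = (\<Sum>a=2..K. lam a * m)" by (simp add: sum_distrib_right)
    also have "\<dots> \<le> (\<Sum>a=2..K. lam a * gap_term \<mu> \<sigma> v a)"
      using mle lampos by (intro sum_mono mult_left_mono) (auto simp: less_imp_le)
    also have "\<dots> \<le> (\<Sum>a=2..K. L v a)" using T[OF v] by (intro sum_mono) auto
    also have "\<dots> = 1" using sumL[OF v] .
    finally have "S / y * m \<le> 1" using lamS by simp
    then show ?thesis unfolding m_def[symmetric] using Spos ypos by (simp add: field_simps)
  qed
  have w1: "w 1 = 1/S" unfolding w_def by simp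
  have wa: "w a = (1/\<psi> a)/S" if "a \<in> {2..K}" for a using that unfolding w_def \<psi>_def by auto
  have wsimp: "w \<in> prob_simplex K"
  proof -
    have "0 \<le> w a" if "a \<in> {1..K}" for a
    proof (cases "a = 1")
      case True then show ?thesis using Spos w1 by simp
    next
      case False then have "a \<in> {2..K}" using that by auto
      then show ?thesis using wa psipos Spos by (simp add: less_imp_le)
    qed
    moreover have "(\<Sum>a=1..K. w a) = 1"
    proof -
      have "(\<Sum>a=1..K. w a) = 1/S + (\<Sum>a=2..K. (1/\<psi> a)/S)"
        using sum_split1[of K w] K2 w1 wa sum.cong[of "{2..K}" "{2..K}" w "\<lambda>a. (1/\<psi> a)/S"] by simp
      also have "\<dots> = (1 + (\<Sum>a=2..K. 1/\<psi> a))/S" by (simp add: sum_divide_distrib add_divide_distrib)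
      also have "\<dots> = 1" unfolding S_def \<psi>_def using Spos S_def \<psi>_def by simp
      finally show ?thesis .
    qed
    ultimately show ?thesis unfolding prob_simplex_def by auto
  qed
  have gw: "gap_term \<mu> \<sigma> w a = y / S" if a: "a \<in> {2..K}" for a
  proof -
    have "w 1 > 0" "w a > 0" using w1 wa[OF a] Spos psipos[OF a] by auto
    then have "gap_term \<mu> \<sigma> w a = dd a / (2*(p/(1/S) + q a/((1/\<psi> a)/S)))"
      unfolding g using w1 wa[OF a] by simp
    also have "\<dots> = y/S" using value_eq[OF ppos qpos[OF a] psipos[OF a] ypos ddeq[OF a] Spos] .
    finally show ?thesis .
  qed
  have ow: "objective K \<mu> \<sigma> w = y / S"
  proof -
    have "gap_term \<mu> \<sigma> w ` {2..K} = {y/S}" using gw ne by auto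
    then show ?thesis unfolding objective_def by simp
  qed
  show opt: "is_optimal K \<mu> \<sigma> w" unfolding is_optimal_def using wsimp ub ow by simp
  fix v assume vopt: "is_optimal K \<mu> \<sigma> v"
  then have v: "v \<in> prob_simplex K" and "objective K \<mu> \<sigma> w \<le> objective K \<mu> \<sigma> v"
    unfolding is_optimal_def using wsimp by auto
  then have ov: "objective K \<mu> \<sigma> v = y / S" using ub[OF v] ow by simp
  have gv: "gap_term \<mu> \<sigma> v a \<ge> y / S" if "a \<in> {2..K}" for a
    using ov that fin unfolding objective_def by (metis Min_le finite_imageI image_eqI)
  have ysp: "y / S > 0" using ypos Spos by simp
  have vpos: "v 1 > 0 \<and> v a > 0" if "a \<in> {2..K}" for a
    using gv[OF that] ysp unfolding gap_term_def by (cases "0 < v 1 \<and> 0 < v a") auto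
  have eqa: "lam a * gap_term \<mu> \<sigma> v a = L v a" if a: "a \<in> {2..K}" for a
  proof (rule ccontr)
    assume "lam a * gap_term \<mu> \<sigma> v a \<noteq> L v a"
    then have lt: "lam a * gap_term \<mu> \<sigma> v a < L v a" using T[OF v a] by simp
    have "1 = (\<Sum>a=2..K. lam a) * (y/S)" using lamS ypos Spos by simp
    also have "\<dots> = (\<Sum>a=2..K. lam a * (y/S))" by (rule sum_distrib_right)
    also have "\<dots> \<le> (\<Sum>a=2..K. lam a * gap_term \<mu> \<sigma> v a)"
      using gv lampos by (intro sum_mono mult_left_mono) (auto simp: less_imp_le)
    also have "\<dots> < (\<Sum>a=2..K. L v a)"
      using T[OF v] lt a by (intro sum_strict_mono_ex1) auto
    also have "\<dots> = 1" using sumL[OF v] .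
    finally show False by simp
  qed
  have vrel: "v 1 = \<psi> a * v a" if a: "a \<in> {2..K}" for a
  proof -
    have "v 1 > 0" "v a > 0" using vpos[OF a] by auto
    moreover have "(dd a/(2*y^2*q a*(\<psi> a)^2)) * (dd a/(2*(p/v 1+q a/v a))) = p* v 1/(q a*(\<psi> a)^2) + v a"
      using eqa[OF a] vpos[OF a] unfolding lam_def L_def g by (simp add: mult.commute)
    ultimately show ?thesis
      using tangent_eq[OF ppos qpos[OF a] psipos[OF a] ypos ddeq[OF a]] by blast
  qed
  have va: "v a = v 1 * (1/\<psi> a)" if a: "a \<in> {2..K}" for a
    using vrel[OF a] psipos[OF a] by (simp add: field_simps)
  have "1 = (\<Sum>a=1..K. v a)" using v unfolding prob_simplex_def by simp
  also have "\<dots> = v 1 + (\<Sum>a=2..K. v 1 * (1/\<psi> a))" using sum_split1[of K v] K2 va by simp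
  also have "\<dots> = v 1 * S" unfolding S_def \<psi>_def by (simp add: sum_distrib_left algebra_simps)
  finally have v1: "v 1 = 1/S" using Spos by (simp add: field_simps)
  show "v 1 = 1/S \<and> (\<forall>a\<in>{2..K}. v a = (1 / psi \<mu> \<sigma> a y)/S)"
    using v1 va unfolding \<psi>_def by simp
qed


lemma mu_le2:
  assumes "\<forall>a\<in>{2..<K}. \<mu> a \<ge> \<mu> (Suc a)"
  shows "a \<in> {2..K} \<Longrightarrow> (\<mu>::nat\<Rightarrow>real) a \<le> \<mu> 2"
proof (induction a)
  case 0 then show ?case by simp
next
  case (Suc n)
  show ?case
  proof (cases "Suc n = 2")
    case True then show ?thesis by (metis order_refl)
  next
    case False
    then have n: "n \<in> {2..<K}" using Suc.prems by auto
    then have "\<mu> (Suc n) \<le> \<mu> n" using assms by blast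
    also have "\<mu> n \<le> \<mu> 2" using Suc.IH n by auto
    finally show ?thesis .
  qed
qed

theorem lemma3:
  fixes K :: nat and \<mu> \<sigma> :: "nat \<Rightarrow> real"
  assumes K2: "2 \<le> K"
    and mu12: "\<mu> 1 > \<mu> 2"
    and mu_sorted: "\<forall>a\<in>{2..<K}. \<mu> a \<ge> \<mu> (Suc a)"
    and sigma_pos: "\<forall>a\<in>{1..K}. \<sigma> a > 0"
  defines "b \<equiv> (\<mu> 1 - \<mu> 2)\<^sup>2 / (2 * (\<sigma> 1)\<^sup>2)"
  shows "strict_mono_on {0<..<b} (Fsum K \<mu> \<sigma>)
    \<and> (Fsum K \<mu> \<sigma> \<longlongrightarrow> 0) (at_right 0)
    \<and> filterlim (Fsum K \<mu> \<sigma>) at_top (at_left b)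
    \<and> (\<exists>!y. y \<in> {0<..<b} \<and> Fsum K \<mu> \<sigma> y = 1)
    \<and> (\<exists>w. is_optimal K \<mu> \<sigma> w)
    \<and> (\<forall>y w. y \<in> {0<..<b} \<and> Fsum K \<mu> \<sigma> y = 1 \<and> is_optimal K \<mu> \<sigma> w \<longrightarrow>
          w 1 = 1 / (1 + (\<Sum>i=2..K. 1 / psi \<mu> \<sigma> i y))
          \<and> (\<forall>a\<in>{2..K}. w a = (1 / psi \<mu> \<sigma> a y) / (1 + (\<Sum>i=2..K. 1 / psi \<mu> \<sigma> i y))))"
proof -
  define p where "p = (\<sigma> 1)^2"
  define q where "q = (\<lambda>a. (\<sigma> a)^2)"
  define dd where "dd = (\<lambda>a. (\<mu> 1 - \<mu> a)^2)"
  define G where "G = (\<lambda>y. \<Sum>a=2..K. 4*p*q a*y^2/(dd a - 2*y*p)^2)"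
  have "1 \<in> {1..K}" using K2 by simp
  then have "\<sigma> 1 > 0" using sigma_pos by blast
  then have ppos: "p > 0" unfolding p_def by simp
  have sigp: "\<sigma> a > 0" if "a \<in> {2..K}" for a using sigma_pos that by auto
  have qpos: "q a > 0" if "a \<in> {2..K}" for a using sigp[OF that] unfolding q_def by auto
  have fin: "finite {2..K}" by simp
  have ne: "{2..K} \<noteq> {}" using K2 by simp
  have two: "2 \<in> {2..K}" using K2 by simp
  have dd2: "dd 2 > 0" unfolding dd_def using mu12 by simp
  have ddge: "dd a \<ge> dd 2" if "a \<in> {2..K}" for a
  proof -
    have "\<mu> a \<le> \<mu> 2" using mu_le2[OF mu_sorted that] .
    then have "0 < \<mu> 1 - \<mu> 2" "\<mu> 1 - \<mu> 2 \<le> \<mu> 1 - \<mu> a" using mu12 by auto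
    then show ?thesis unfolding dd_def by (intro power_mono) auto
  qed
  have bdef: "b = dd 2 / (2*p)" unfolding b_def dd_def p_def by simp
  have bpos: "b > 0" using bdef dd2 ppos by simp
  have Npos: "dd a - 2*y*p > 0" if "a \<in> {2..K}" "y < b" for a y
  proof -
    have "2*y*p < 2*b*p" using that(2) ppos by simp
    also have "2*b*p = dd 2" using bdef ppos by simp
    finally show ?thesis using ddge[OF that(1)] by simp
  qed
  have gapc: "\<forall>a\<in>{2..K}. 2*y*(\<sigma> 1)^2 < (\<mu> 1 - \<mu> a)^2" if "y < b" for y
    using Npos that unfolding dd_def p_def by (auto simp: mult.commute)
  have FG: "Fsum K \<mu> \<sigma> = G"
  proof
    fix y show "Fsum K \<mu> \<sigma> y = G y"
      unfolding Fsum_def G_def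
      by (intro sum.cong refl, subst term_eq) (auto simp: sigp p_def q_def dd_def mult_ac)
  qed
  have smono: "strict_mono_on {0<..<b} G"
  proof (rule strict_mono_onI)
    fix x y assume x: "x \<in> {0<..<b}" and y: "y \<in> {0<..<b}" and xy: "x < y"
    have "4*p*q a*x^2/(dd a - 2*x*p)^2 < 4*p*q a*y^2/(dd a - 2*y*p)^2" if a: "a \<in> {2..K}" for a
    proof -
      have Nx: "dd a - 2*x*p > 0" and Ny: "dd a - 2*y*p > 0" using Npos[OF a] x y by auto
      have "x/(dd a - 2*x*p) < y/(dd a - 2*y*p)"
      proof -
        have "dd a > 0" using ddge[OF a] dd2 by simp
        then have "x * dd a < y * dd a" using xy by simp
        then show ?thesis using Nx Ny by (simp add: field_simps)
      qed
      moreover have "0 \<le> x/(dd a - 2*x*p)" using Nx x by simp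
      ultimately have "(x/(dd a - 2*x*p))^2 < (y/(dd a - 2*y*p))^2"
        by (intro power_strict_mono) auto
      then have "4*p*q a*(x/(dd a - 2*x*p))^2 < 4*p*q a*(y/(dd a - 2*y*p))^2"
        using ppos qpos[OF a] by simp
      then show ?thesis by (simp add: power_divide)
    qed
    then show "G x < G y" unfolding G_def by (intro sum_strict_mono fin ne) auto
  qed
  have cont: "continuous_on {0..<b} G"
  proof -
    have "(dd a - 2*x*p)^2 \<noteq> 0" if "a \<in> {2..K}" "x \<in> {0..<b}" for a x
      using Npos[of a x] that by auto
    then show ?thesis unfolding G_def by (intro continuous_intros) auto
  qed
  have G0: "G 0 = 0" unfolding G_def by simp
  have lim0: "(G \<longlongrightarrow> 0) (at_right 0)"
  proof -
    have "(G \<longlongrightarrow> G 0) (at 0 within {0..<b})"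
      using cont bpos by (simp add: continuous_on_def)
    moreover have "at_right 0 \<le> at (0::real) within {0..<b}"
    proof -
      have "at_right (0::real) = at 0 within {0<..<b}"
        using bpos by (intro at_within_nhd[of _ "{..<b}"]) auto
      also have "\<dots> \<le> at 0 within {0..<b}" by (intro at_le) auto
      finally show ?thesis .
    qed
    ultimately show ?thesis using G0 tendsto_mono by metis
  qed
  have limb: "filterlim G at_top (at_left b)"
  proof -
    let ?N = "\<lambda>y. (dd 2 - 2*y*p)^2"
    have "(?N \<longlongrightarrow> (dd 2 - 2*b*p)^2) (at_left b)" by (intro tendsto_intros)
    moreover have "dd 2 - 2*b*p = 0" using bdef ppos by simp
    ultimately have N0: "(?N \<longlongrightarrow> 0) (at_left b)" by simp
    have ev: "eventually (\<lambda>y. y \<in> {0<..<b}) (at_left b)"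
      using eventually_at_left_real[OF bpos] .
    have Np: "eventually (\<lambda>y. 0 < ?N y) (at_left b)"
      using ev
    proof eventually_elim
      case (elim y)
      then have "dd 2 - 2*y*p > 0" using Npos[OF two, of y] by simp
      then show ?case by simp
    qed
    have f: "((\<lambda>y. 4*p*q 2*y^2) \<longlongrightarrow> 4*p*q 2*b^2) (at_left b)" by (intro tendsto_intros)
    have "filterlim (\<lambda>y. (4*p*q 2*y^2) * inverse (?N y)) at_top (at_left b)"
      by (rule filterlim_tendsto_pos_mult_at_top[OF f])
         (use ppos qpos[OF two] bpos filterlim_inverse_at_top[OF N0 Np] in auto)
    moreover have "eventually (\<lambda>y. (4*p*q 2*y^2) * inverse (?N y) \<le> G y) (at_left b)"
      using ev
    proof eventually_elim
      case (elim y)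
      have "(4*p*q 2*y^2) * inverse (?N y) = 4*p*q 2*y^2/(dd 2 - 2*y*p)^2"
        by (simp add: divide_inverse)
      also have "\<dots> \<le> G y" unfolding G_def
      proof (intro member_le_sum two fin)
        fix a assume a: "a \<in> {2..K} - {2}"
        then have "q a > 0" using qpos by auto
        then show "0 \<le> 4*p*q a*y^2/(dd a - 2*y*p)^2" using ppos by simp
      qed
      finally show ?case .
    qed
    ultimately show ?thesis by (rule filterlim_at_top_mono)
  qed
  have ex1: "\<exists>!y. y \<in> {0<..<b} \<and> G y = 1"
  proof -
    have "eventually (\<lambda>y. G y \<ge> 2 \<and> y \<in> {0<..<b}) (at_left b)"
      using limb[unfolded filterlim_at_top] eventually_at_left_real[OF bpos]
      by (auto intro: eventually_conj)
    then obtain y1 where y1: "G y1 \<ge> 2" "y1 \<in> {0<..<b}"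
      using eventually_happens[of _ "at_left b"] by auto
    have "continuous_on {0..y1} G" using y1 by (intro continuous_on_subset[OF cont]) auto
    then obtain y where y: "0 \<le> y" "y \<le> y1" "G y = 1"
      using IVT'[of G 0 1 y1] G0 y1 by auto
    then have "y \<noteq> 0" using G0 by auto
    then have yin: "y \<in> {0<..<b}" using y y1 by auto
    show ?thesis
    proof (rule ex1I[of _ y])
      show "y \<in> {0<..<b} \<and> G y = 1" using yin y by simp
      fix z assume z: "z \<in> {0<..<b} \<and> G z = 1"
      show "z = y"
      proof (rule ccontr)
        assume "z \<noteq> y"
        then have "z < y \<or> y < z" by auto
        then have "G z \<noteq> G y" using smono z yin unfolding strict_mono_on_def by force
        then show False using z y by simp
      qed
    qed
  qed
  have char: "is_optimal K \<mu> \<sigma> (\<lambda>a. if a = 1 then 1/(1 + (\<Sum>i=2..K. 1 / psi \<mu> \<sigma> i y))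
                else (1 / psi \<mu> \<sigma> a y)/(1 + (\<Sum>i=2..K. 1 / psi \<mu> \<sigma> i y)))"
    and char2: "\<And>v. is_optimal K \<mu> \<sigma> v \<Longrightarrow> v 1 = 1/(1 + (\<Sum>i=2..K. 1 / psi \<mu> \<sigma> i y))
       \<and> (\<forall>a\<in>{2..K}. v a = (1 / psi \<mu> \<sigma> a y)/(1 + (\<Sum>i=2..K. 1 / psi \<mu> \<sigma> i y)))"
    if "y \<in> {0<..<b}" "Fsum K \<mu> \<sigma> y = 1" for y
    using opt_char[OF K2 sigma_pos _ gapc that(2)] that by auto
  have exw: "\<exists>w. is_optimal K \<mu> \<sigma> w"
    using ex1 char unfolding FG[symmetric] by blast
  show ?thesis unfolding FG
    using smono lim0 limb ex1 exw char2 unfolding FG by blast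
qed

end
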